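(* Let $\mathbf A$ be a finite algebra. If $\mathbf A$ has a nontrivial strongly abelian congruence, then $c^s_{\mathbf A}(n)\in 2^{\Omega(n^{1/k})}$ where $k=\lfloor\log_2|A|\rfloor$.
   Context: For a finite algebra $\mathbf A$, $c^s_{\mathbf A}(n)$ is the maximum number of surjective homomorphisms $\mathbf X\to\mathbf A$ over algebras $\mathbf X$ in the signature of $\mathbf A$ with at most $n$ elements. $\mathrm{Clo}_k(\mathbf A)$ is the set of $k$-ary term operations. A congruence $\alpha$ of $\mathbf A$ is strongly abelian if for every $k\ge1$, every $t\in\mathrm{Clo}_k(\mathbf A)$ and all $x_1,\dots,x_k,y_1,\dots,y_k,z_2,\dots,z_k\in A$ with $(x_i,y_i)\in\alpha$ for $1\le i\le k$ and $(y_i,z_i)\in\alpha$ for $2\le i\le k$, $t(x_1,\dots,x_k)=t(y_1,\dots,y_k)$ implies $t(x_1,z_2,\dots,z_k)=t(y_1,z_2,\dots,z_k)$. Nontrivial means different from the equality relation. *)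

theory Defs
  imports Complex_Main "HOL-Library.FuncSet"
begin

text \<open>Signature: arity function ar :: 's => nat.  An algebra in this signature is a pair
 (carrier, interpretation of the operation symbols), an operation taking lists of length ar f.\<close>

type_synonym ('a, 's) alg = "'a set \<times> ('s \<Rightarrow> 'a list \<Rightarrow> 'a)"

definition is_algebra :: "('s \<Rightarrow> nat) \<Rightarrow> ('a, 's) alg \<Rightarrow> bool" where
  "is_algebra ar X \<longleftrightarrow>
     (\<forall>f xs. length xs = ar f \<and> set xs \<subseteq> fst X \<longrightarrow> snd X f xs \<in> fst X)"

definition is_hom :: "('s \<Rightarrow> nat) \<Rightarrow> ('a, 's) alg \<Rightarrow> ('b, 's) alg \<Rightarrow> ('a \<Rightarrow> 'b) \<Rightarrow> bool" where
  "is_hom ar X Y h \<longleftrightarrow> h \<in> fst X \<rightarrow> fst Y \<and>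
     (\<forall>f xs. length xs = ar f \<and> set xs \<subseteq> fst X \<longrightarrow> h (snd X f xs) = snd Y f (map h xs))"

definition surj_homs :: "('s \<Rightarrow> nat) \<Rightarrow> ('a, 's) alg \<Rightarrow> ('b, 's) alg \<Rightarrow> ('a \<Rightarrow> 'b) set" where
  "surj_homs ar X Y = {h. h \<in> fst X \<rightarrow>\<^sub>E fst Y \<and> is_hom ar X Y h \<and> h ` fst X = fst Y}"

text \<open>c^s_A(n): every algebra with at most n elements is isomorphic to one whose carrier is a
 subset of nat, so we range over those.\<close>
definition cs :: "('s \<Rightarrow> nat) \<Rightarrow> ('b, 's) alg \<Rightarrow> nat \<Rightarrow> nat" where
  "cs ar A n = Sup {card (surj_homs ar X A) | X :: (nat, 's) alg.
                      is_algebra ar X \<and> finite (fst X) \<and> card (fst X) \<le> n}"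

text \<open>k-ary term operations of A, as functions on lists (meaningful on lists of length k).\<close>
inductive_set Clo :: "('s \<Rightarrow> nat) \<Rightarrow> ('a, 's) alg \<Rightarrow> nat \<Rightarrow> ('a list \<Rightarrow> 'a) set"
  for ar A k where
  proj: "i < k \<Longrightarrow> (\<lambda>xs. xs ! i) \<in> Clo ar A k"
| app: "length ts = ar f \<Longrightarrow> (\<forall>t\<in>set ts. t \<in> Clo ar A k) \<Longrightarrow>
          (\<lambda>xs. snd A f (map (\<lambda>t. t xs) ts)) \<in> Clo ar A k"

definition is_congruence :: "('s \<Rightarrow> nat) \<Rightarrow> ('a, 's) alg \<Rightarrow> ('a \<times> 'a) set \<Rightarrow> bool" where
  "is_congruence ar A \<alpha> \<longleftrightarrow> equiv (fst A) \<alpha> \<and>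
     (\<forall>f xs ys. length xs = ar f \<and> length ys = ar f \<and> set xs \<subseteq> fst A \<and> set ys \<subseteq> fst A \<and>
        (\<forall>i < ar f. (xs ! i, ys ! i) \<in> \<alpha>) \<longrightarrow> (snd A f xs, snd A f ys) \<in> \<alpha>)"

definition strongly_abelian :: "('s \<Rightarrow> nat) \<Rightarrow> ('a, 's) alg \<Rightarrow> ('a \<times> 'a) set \<Rightarrow> bool" where
  "strongly_abelian ar A \<alpha> \<longleftrightarrow>
     (\<forall>k \<ge> 1. \<forall>t \<in> Clo ar A k. \<forall>xs ys zs.
        length xs = k \<and> length ys = k \<and> length zs = k \<and>
        set xs \<subseteq> fst A \<and> set ys \<subseteq> fst A \<and> set zs \<subseteq> fst A \<and>
        (\<forall>i < k. (xs ! i, ys ! i) \<in> \<alpha>) \<and>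
        (\<forall>i. 1 \<le> i \<and> i < k \<longrightarrow> (ys ! i, zs ! i) \<in> \<alpha>) \<and>
        t xs = t ys \<longrightarrow>
        t (xs ! 0 # tl zs) = t (ys ! 0 # tl zs))"

end

theory Submission
  imports Defs
begin

lemma cs_bdd:
  assumes "finite (fst A)"
  shows "bdd_above {card (surj_homs ar X A) | X :: (nat, 's) alg.
                      is_algebra ar X \<and> finite (fst X) \<and> card (fst X) \<le> n}"
proof (rule bdd_aboveI[where M = "(card (fst A) + 1) ^ n"], clarify)
  fix X :: "(nat,'s) alg"
  assume X: "is_algebra ar X" "finite (fst X)" "card (fst X) \<le> n"
  have "card (surj_homs ar X A) \<le> card (fst X \<rightarrow>\<^sub>E fst A)"
    by (rule card_mono) (auto simp: surj_homs_def finite_PiE assms X)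
  also have "\<dots> = card (fst A) ^ card (fst X)" using X by (simp add: card_PiE)
  also have "\<dots> \<le> (card (fst A) + 1) ^ card (fst X)" by (simp add: power_mono)
  also have "\<dots> \<le> (card (fst A) + 1) ^ n" using X by (simp add: power_increasing)
  finally show "card (surj_homs ar X A) \<le> (card (fst A) + 1) ^ n" .
qed

lemma cs_lower:
  fixes Y :: "('b, 's) alg" and A :: "('a, 's) alg"
  assumes Yalg: "is_algebra ar Y" and Yfin: "finite (fst Y)" and Yn: "card (fst Y) \<le> n"
    and Afin: "finite (fst A)"
  shows "card (surj_homs ar Y A) \<le> cs ar A n"
proof -
  obtain \<phi> where bij: "bij_betw \<phi> (fst Y) {0..<card (fst Y)}"
    using ex_bij_betw_finite_nat[OF Yfin] by blast
  define \<psi> where "\<psi> = inv_into (fst Y) \<phi>"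
  have inj: "inj_on \<phi> (fst Y)" using bij by (simp add: bij_betw_def)
  have \<psi>\<phi>: "\<psi> (\<phi> y) = y" if "y \<in> fst Y" for y
    using inj that by (simp add: \<psi>_def)
  have \<psi>in: "\<psi> x \<in> fst Y" if "x \<in> \<phi> ` fst Y" for x
    using that \<psi>\<phi> by auto
  define X :: "(nat, 's) alg" where "X = (\<phi> ` fst Y, \<lambda>f xs. \<phi> (snd Y f (map \<psi> xs)))"
  have Xalg: "is_algebra ar X"
    unfolding is_algebra_def X_def
  proof (clarsimp)
    fix f xs assume "length xs = ar f" "set xs \<subseteq> \<phi> ` fst Y"
    then have "set (map \<psi> xs) \<subseteq> fst Y" "length (map \<psi> xs) = ar f" using \<psi>in by auto
    then have "snd Y f (map \<psi> xs) \<in> fst Y"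
      using Yalg unfolding is_algebra_def by blast
    then show "\<phi> (snd Y f (map \<psi> xs)) \<in> \<phi> ` fst Y" by blast
  qed
  have Xcard: "card (fst X) = card (fst Y)" using inj by (simp add: X_def card_image)
  define H where "H = (\<lambda>h :: 'b \<Rightarrow> 'a. restrict (h \<circ> \<psi>) (fst X))"
  have Hmap: "H h \<in> surj_homs ar X A" if h: "h \<in> surj_homs ar Y A" for h
  proof -
    have h1: "h \<in> fst Y \<rightarrow>\<^sub>E fst A" and h2: "is_hom ar Y A h" and h3: "h ` fst Y = fst A"
      using h by (auto simp: surj_homs_def)
    have "H h \<in> fst X \<rightarrow>\<^sub>E fst A"
      using h1 \<psi>in by (auto simp: H_def X_def)
    moreover have "is_hom ar X A (H h)"
      unfolding is_hom_def
    proof (intro conjI allI impI)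
      show "H h \<in> fst X \<rightarrow> fst A" using \<open>H h \<in> fst X \<rightarrow>\<^sub>E fst A\<close> by auto
      fix f xs assume a: "length xs = ar f \<and> set xs \<subseteq> fst X"
      have m: "set (map \<psi> xs) \<subseteq> fst Y" "length (map \<psi> xs) = ar f" using a \<psi>in by (auto simp: X_def)
      have yin: "snd Y f (map \<psi> xs) \<in> fst Y" using Yalg m unfolding is_algebra_def by blast
      have "snd X f xs \<in> fst X" using Xalg a unfolding is_algebra_def by blast
      then have "H h (snd X f xs) = h (\<psi> (\<phi> (snd Y f (map \<psi> xs))))"
        by (simp add: H_def X_def)
      also have "\<dots> = h (snd Y f (map \<psi> xs))"
        using yin \<psi>\<phi> by simp
      also have "\<dots> = snd A f (map h (map \<psi> xs))"
        using h2 m unfolding is_hom_def by auto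
      also have "map h (map \<psi> xs) = map (H h) xs"
        using a by (auto simp: H_def)
      finally show "H h (snd X f xs) = snd A f (map (H h) xs)" .
    qed
    moreover have "H h ` fst X = fst A"
    proof -
      have "H h ` fst X = h ` \<psi> ` \<phi> ` fst Y" by (auto simp: H_def X_def image_image)
      also have "\<psi> ` \<phi> ` fst Y = fst Y" using \<psi>\<phi> by (force simp: image_image)
      finally show ?thesis using h3 by simp
    qed
    ultimately show ?thesis by (simp add: surj_homs_def)
  qed
  have Hinj: "inj_on H (surj_homs ar Y A)"
  proof (rule inj_onI)
    fix h1 h2 assume a: "h1 \<in> surj_homs ar Y A" "h2 \<in> surj_homs ar Y A" "H h1 = H h2"
    show "h1 = h2"
    proof (rule extensionalityI[of _ "fst Y"])
      show "h1 \<in> extensional (fst Y)" "h2 \<in> extensional (fst Y)"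
        using a by (auto simp: surj_homs_def PiE_def)
      fix y assume y: "y \<in> fst Y"
      have "H h1 (\<phi> y) = H h2 (\<phi> y)" using a by simp
      then show "h1 y = h2 y" using y \<psi>\<phi> by (simp add: H_def X_def)
    qed
  qed
  have finX: "finite (surj_homs ar X A)"
    by (rule finite_subset[of _ "fst X \<rightarrow>\<^sub>E fst A"]) 
       (auto simp: surj_homs_def finite_PiE Afin X_def Yfin)
  have "card (surj_homs ar Y A) \<le> card (surj_homs ar X A)"
    by (rule card_inj_on_le[OF Hinj _ finX]) (use Hmap in blast)
  also have "\<dots> \<le> cs ar A n"
    unfolding cs_def
  proof (rule cSup_upper[OF _ cs_bdd[OF Afin]])
    have "finite (fst X)" "card (fst X) \<le> n" using Xcard Yn Yfin by (auto simp: X_def)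
    then show "card (surj_homs ar X A) \<in> {card (surj_homs ar X A) | X :: (nat, 's) alg.
                      is_algebra ar X \<and> finite (fst X) \<and> card (fst X) \<le> n}"
      using Xalg by blast
  qed
  finally show ?thesis .
qed


lemma Clo_in:
  assumes "t \<in> Clo ar A K" and alg: "is_algebra ar A"
  shows "length xs = K \<Longrightarrow> set xs \<subseteq> fst A \<Longrightarrow> t xs \<in> fst A"
  using assms(1)
proof (induction rule: Clo.induct)
  case (proj i)
  then show ?case by auto
next
  case (app ts f)
  have "set (map (\<lambda>t. t xs) ts) \<subseteq> fst A" using app by auto
  then show ?case using alg app(1) unfolding is_algebra_def by auto
qed

lemma Clo_subst:
  assumes "t \<in> Clo ar A K"
  shows "(\<forall>s\<in>set ss. s \<in> Clo ar A K') \<Longrightarrow> length ss = K \<Longrightarrow>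
         (\<lambda>ws. t (map (\<lambda>s. s ws) ss)) \<in> Clo ar A K'"
  using assms
proof (induction rule: Clo.induct)
  case (proj i)
  have "(\<lambda>ws. map (\<lambda>s. s ws) ss ! i) = ss ! i" using proj by auto
  then show ?case using proj by auto
next
  case (app ts f)
  have "(\<lambda>ws. snd A f (map (\<lambda>t. t ws) (map (\<lambda>t ws. t (map (\<lambda>s. s ws) ss)) ts))) \<in> Clo ar A K'"
    by (rule Clo.app) (use app in auto)
  then show ?case by (simp add: o_def)
qed

locale sactx =
  fixes ar :: "'s \<Rightarrow> nat" and A :: "('a, 's) alg" and \<alpha> :: "('a \<times> 'a) set"
    and a b :: 'a and cl :: "'a list"
  assumes alg: "is_algebra ar A" and fin: "finite (fst A)"
    and cong: "is_congruence ar A \<alpha>" and sab: "strongly_abelian ar A \<alpha>"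
    and ab: "(a, b) \<in> \<alpha>" and anb: "a \<noteq> b" and cl: "set cl = fst A"
begin

abbreviation "L \<equiv> length cl"

definition Sig :: "nat \<Rightarrow> (nat \<Rightarrow> 'a) set" where
  "Sig m = {0..<m} \<rightarrow>\<^sub>E {a, b}"

definition args :: "nat \<Rightarrow> (nat \<Rightarrow> 'a) \<Rightarrow> 'a list" where
  "args m \<sigma> = map (\<lambda>l. if l < m then \<sigma> l else cl ! (l - m)) [0..<m + L]"

definition Ycar :: "nat \<Rightarrow> ((nat \<Rightarrow> 'a) \<Rightarrow> 'a) set" where
  "Ycar m = {restrict (\<lambda>\<sigma>. t (args m \<sigma>)) (Sig m) | t. t \<in> Clo ar A (m + L)}"

definition Yop :: "nat \<Rightarrow> 's \<Rightarrow> ((nat \<Rightarrow> 'a) \<Rightarrow> 'a) list \<Rightarrow> ((nat \<Rightarrow> 'a) \<Rightarrow> 'a)" where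
  "Yop m f qs = restrict (\<lambda>\<sigma>. snd A f (map (\<lambda>q. q \<sigma>) qs)) (Sig m)"

definition ev :: "nat \<Rightarrow> (nat \<Rightarrow> 'a) \<Rightarrow> ((nat \<Rightarrow> 'a) \<Rightarrow> 'a) \<Rightarrow> 'a" where
  "ev m \<sigma> = restrict (\<lambda>q. q \<sigma>) (Ycar m)"

lemma equivA: "equiv (fst A) \<alpha>" using cong by (simp add: is_congruence_def)

lemma aA: "a \<in> fst A" and bA: "b \<in> fst A"
  using equiv_type[OF equivA] ab by auto

lemma refl_rel: "x \<in> fst A \<Longrightarrow> (x, x) \<in> \<alpha>"
  using equivA unfolding equiv_def by (blast intro: refl_onD)

lemma ba: "(b, a) \<in> \<alpha>"
  using equivA ab unfolding equiv_def by (blast intro: symD)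

lemma ab_rel: "x \<in> {a, b} \<Longrightarrow> y \<in> {a, b} \<Longrightarrow> (x, y) \<in> \<alpha>"
  using ab ba refl_rel[OF aA] refl_rel[OF bA] by blast

lemma Sig_val: "\<sigma> \<in> Sig m \<Longrightarrow> i < m \<Longrightarrow> \<sigma> i \<in> {a, b}"
  by (auto simp: Sig_def PiE_def Pi_def)

lemma args_len[simp]: "length (args m \<sigma>) = m + L" by (simp add: args_def)

lemma args_nth: "l < m + L \<Longrightarrow> args m \<sigma> ! l = (if l < m then \<sigma> l else cl ! (l - m))"
  by (simp add: args_def)

lemma args_elem: "\<sigma> \<in> Sig m \<Longrightarrow> l < m + L \<Longrightarrow> (if l < m then \<sigma> l else cl ! (l - m)) \<in> fst A"
proof -
  assume s: "\<sigma> \<in> Sig m" and l: "l < m + L"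
  show ?thesis
  proof (cases "l < m")
    case True
    then have "\<sigma> l \<in> {a, b}" using Sig_val[OF s] by blast
    then show ?thesis using True aA bA by auto
  next
    case False
    then have "l - m < L" using l by linarith
    then have "cl ! (l - m) \<in> set cl" by (rule nth_mem)
    then show ?thesis using False cl by simp
  qed
qed

lemma args_A: "\<sigma> \<in> Sig m \<Longrightarrow> set (args m \<sigma>) \<subseteq> fst A"
proof -
  assume s: "\<sigma> \<in> Sig m"
  have eq: "set (args m \<sigma>) = (\<lambda>l. if l < m then \<sigma> l else cl ! (l - m)) ` {0..<m + L}"
    unfolding args_def set_map set_upt ..
  show "set (args m \<sigma>) \<subseteq> fst A" unfolding eq
  proof (rule image_subsetI)
    fix l assume "l \<in> {0..<m + L}"
    then have "l < m + L" by simp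
    then show "(if l < m then \<sigma> l else cl ! (l - m)) \<in> fst A" by (rule args_elem[OF s])
  qed
qed

lemma args_rel: "\<sigma> \<in> Sig m \<Longrightarrow> \<tau> \<in> Sig m \<Longrightarrow> l < m + L \<Longrightarrow> (args m \<sigma> ! l, args m \<tau> ! l) \<in> \<alpha>"
proof -
  assume s: "\<sigma> \<in> Sig m" "\<tau> \<in> Sig m" "l < m + L"
  show ?thesis
  proof (cases "l < m")
    case True
    then have "\<sigma> l \<in> {a, b}" "\<tau> l \<in> {a, b}" using Sig_val s by blast+
    then have "(\<sigma> l, \<tau> l) \<in> \<alpha>" by (rule ab_rel)
    then show ?thesis using s(3) True by (simp add: args_nth)
  next
    case False
    have "(if l < m then \<sigma> l else cl ! (l - m)) \<in> fst A" using args_elem s by blast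
    then have "(cl ! (l - m), cl ! (l - m)) \<in> \<alpha>" using False refl_rel by simp
    then show ?thesis using s(3) False by (simp add: args_nth)
  qed
qed

lemma Ycar_val: "q \<in> Ycar m \<Longrightarrow> \<sigma> \<in> Sig m \<Longrightarrow> q \<sigma> \<in> fst A"
  unfolding Ycar_def using Clo_in[OF _ alg] args_A by auto

lemma Y_alg: "is_algebra ar (Ycar m, Yop m)"
  unfolding is_algebra_def
proof (clarsimp)
  fix f qs assume len: "length qs = ar f" and qs: "set qs \<subseteq> Ycar m"
  have "\<forall>q\<in>set qs. \<exists>t. t \<in> Clo ar A (m + L) \<and> q = restrict (\<lambda>\<sigma>. t (args m \<sigma>)) (Sig m)"
    using qs unfolding Ycar_def by blast
  then obtain T where T: "\<And>q. q \<in> set qs \<Longrightarrow> T q \<in> Clo ar A (m + L) \<and> q = restrict (\<lambda>\<sigma>. T q (args m \<sigma>)) (Sig m)"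
    by metis
  define t where "t = (\<lambda>xs. snd A f (map (\<lambda>t. t xs) (map T qs)))"
  have "t \<in> Clo ar A (m + L)" unfolding t_def
    by (rule Clo.app) (use len T in auto)
  moreover have "Yop m f qs = restrict (\<lambda>\<sigma>. t (args m \<sigma>)) (Sig m)"
  proof (rule ext)
    fix \<sigma>
    show "Yop m f qs \<sigma> = restrict (\<lambda>\<sigma>. t (args m \<sigma>)) (Sig m) \<sigma>"
    proof (cases "\<sigma> \<in> Sig m")
      case True
      have eq: "map (\<lambda>q. q \<sigma>) qs = map (\<lambda>q. T q (args m \<sigma>)) qs"
      proof (rule map_cong[OF refl])
        fix q assume "q \<in> set qs"
        then have "q = restrict (\<lambda>\<sigma>. T q (args m \<sigma>)) (Sig m)" using T by blast
        then show "q \<sigma> = T q (args m \<sigma>)" using True by (metis restrict_apply')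
      qed
      have "Yop m f qs \<sigma> = snd A f (map (\<lambda>q. q \<sigma>) qs)" using True by (simp add: Yop_def)
      also have "\<dots> = snd A f (map (\<lambda>q. T q (args m \<sigma>)) qs)" using eq by (rule arg_cong)
      also have "\<dots> = restrict (\<lambda>\<sigma>. t (args m \<sigma>)) (Sig m) \<sigma>" using True by (simp add: t_def o_def)
      finally show ?thesis .
    next
      case False
      then show ?thesis by (simp add: Yop_def)
    qed
  qed
  ultimately show "Yop m f qs \<in> Ycar m" unfolding Ycar_def by blast
qed

lemma proj_Ycar: "l < m + L \<Longrightarrow> restrict (\<lambda>\<sigma>. args m \<sigma> ! l) (Sig m) \<in> Ycar m"
  unfolding Ycar_def using Clo.proj[of l "m + L" ar A]
  by (intro CollectI exI[of _ "\<lambda>xs. xs ! l"]) auto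

lemma ev_surj: assumes s: "\<sigma> \<in> Sig m" shows "ev m \<sigma> \<in> surj_homs ar (Ycar m, Yop m) A"
proof -
  have 1: "ev m \<sigma> \<in> Ycar m \<rightarrow>\<^sub>E fst A"
    using Ycar_val s by (auto simp: ev_def)
  have 2: "is_hom ar (Ycar m, Yop m) A (ev m \<sigma>)"
    unfolding is_hom_def
  proof (intro conjI allI impI)
    show "ev m \<sigma> \<in> fst (Ycar m, Yop m) \<rightarrow> fst A" using 1 by auto
    fix f qs assume a: "length qs = ar f \<and> set qs \<subseteq> fst (Ycar m, Yop m)"
    then have "Yop m f qs \<in> Ycar m" using Y_alg unfolding is_algebra_def by auto
    then have "ev m \<sigma> (Yop m f qs) = snd A f (map (\<lambda>q. q \<sigma>) qs)"
      using s by (simp add: ev_def Yop_def)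
    also have "map (\<lambda>q. q \<sigma>) qs = map (ev m \<sigma>) qs"
      using a by (auto simp: ev_def)
    finally show "ev m \<sigma> (snd (Ycar m, Yop m) f qs) = snd A f (map (ev m \<sigma>) qs)" by simp
  qed
  have 3: "ev m \<sigma> ` Ycar m = fst A"
  proof
    show "ev m \<sigma> ` Ycar m \<subseteq> fst A" using 1 by auto
    show "fst A \<subseteq> ev m \<sigma> ` Ycar m"
    proof
      fix c assume "c \<in> fst A"
      then obtain j where j: "j < L" "c = cl ! j" using cl by (metis in_set_conv_nth)
      have "restrict (\<lambda>\<sigma>. args m \<sigma> ! (m + j)) (Sig m) \<in> Ycar m" using j by (intro proj_Ycar) simp
      moreover have "ev m \<sigma> (restrict (\<lambda>\<sigma>. args m \<sigma> ! (m + j)) (Sig m)) = c"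
        using calculation s j by (simp add: ev_def args_nth)
      ultimately show "c \<in> ev m \<sigma> ` Ycar m" by force
    qed
  qed
  show ?thesis using 1 2 3 by (simp add: surj_homs_def)
qed

lemma ev_inj: "inj_on (ev m) (Sig m)"
proof (rule inj_onI)
  fix \<sigma> \<tau> assume s: "\<sigma> \<in> Sig m" "\<tau> \<in> Sig m" "ev m \<sigma> = ev m \<tau>"
  show "\<sigma> = \<tau>"
  proof (rule ccontr)
    assume "\<sigma> \<noteq> \<tau>"
    then obtain i where i: "\<sigma> i \<noteq> \<tau> i" by blast
    have "i < m" using i s unfolding Sig_def by (metis PiE_arb atLeastLessThan_iff zero_le)
    have "restrict (\<lambda>\<sigma>. args m \<sigma> ! i) (Sig m) \<in> Ycar m" using \<open>i < m\<close> by (intro proj_Ycar) simp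
    then have "ev m \<sigma> (restrict (\<lambda>\<sigma>. args m \<sigma> ! i) (Sig m)) = \<sigma> i"
      "ev m \<tau> (restrict (\<lambda>\<sigma>. args m \<sigma> ! i) (Sig m)) = \<tau> i"
      using s(1,2) \<open>i < m\<close> by (simp_all add: ev_def args_nth)
    moreover have "ev m \<sigma> (restrict (\<lambda>\<sigma>. args m \<sigma> ! i) (Sig m)) = ev m \<tau> (restrict (\<lambda>\<sigma>. args m \<sigma> ! i) (Sig m))"
      using s(3) by (rule fun_cong)
    ultimately show False using i by simp
  qed
qed

lemma card_Sig: "card (Sig m) = 2 ^ m"
proof -
  have "card {a, b} = 2" using anb by simp
  then show ?thesis by (simp add: Sig_def card_PiE)
qed

lemma many_homs: assumes "finite (Ycar m)" shows "2 ^ m \<le> card (surj_homs ar (Ycar m, Yop m) A)"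
proof -
  have fin2: "finite (surj_homs ar (Ycar m, Yop m) A)"
    by (rule finite_subset[of _ "Ycar m \<rightarrow>\<^sub>E fst A"]) (auto simp: surj_homs_def finite_PiE assms fin)
  have "card (Sig m) \<le> card (surj_homs ar (Ycar m, Yop m) A)"
    by (rule card_inj_on_le[OF ev_inj _ fin2]) (use ev_surj in blast)
  then show ?thesis by (simp add: card_Sig)
qed


lemma poly_tc:
  assumes t: "t \<in> Clo ar A (m + L)" and i: "i < m"
    and s1: "\<sigma>1 \<in> Sig m" and s2: "\<sigma>2 \<in> Sig m" and s: "\<sigma> \<in> Sig m"
    and eq: "t (args m \<sigma>1) = t (args m \<sigma>2)"
  shows "t (args m (\<sigma>(i := \<sigma>1 i))) = t (args m (\<sigma>(i := \<sigma>2 i)))"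
proof -
  define t' where "t' = (\<lambda>ws. t (map (\<lambda>l. ws ! (if l = i then 0 else Suc l)) [0..<m + L]))"
  have "(\<lambda>ws. t (map (\<lambda>s. s ws) (map (\<lambda>l ws. ws ! (if l = i then 0 else Suc l)) [0..<m + L])))
        \<in> Clo ar A (m + L + 1)"
    by (rule Clo_subst[OF t]) (auto intro: Clo.proj)
  then have t'C: "t' \<in> Clo ar A (m + L + 1)" by (simp add: t'_def o_def)
  have key: "t' (x # args m \<rho>) = t (args m (\<rho>(i := x)))" for x \<rho>
  proof -
    have "map (\<lambda>l. (x # args m \<rho>) ! (if l = i then 0 else Suc l)) [0..<m + L] = args m (\<rho>(i := x))"
      by (rule nth_equalityI) (use i in \<open>auto simp: args_nth\<close>)
    then show ?thesis by (simp add: t'_def)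
  qed
  have si: "\<sigma>1 i \<in> {a, b}" "\<sigma>2 i \<in> {a, b}" using Sig_val s1 s2 i by auto
  have rel1: "\<forall>l < m + L + 1. ((\<sigma>1 i # args m \<sigma>1) ! l, (\<sigma>2 i # args m \<sigma>2) ! l) \<in> \<alpha>"
  proof (intro allI impI)
    fix l assume l: "l < m + L + 1"
    show "((\<sigma>1 i # args m \<sigma>1) ! l, (\<sigma>2 i # args m \<sigma>2) ! l) \<in> \<alpha>"
    proof (cases l)
      case 0 then show ?thesis using si ab_rel by simp
    next
      case (Suc l') then show ?thesis using l args_rel[OF s1 s2] by simp
    qed
  qed
  have rel2: "\<forall>l. 1 \<le> l \<and> l < m + L + 1 \<longrightarrow> ((\<sigma>2 i # args m \<sigma>2) ! l, (\<sigma> i # args m \<sigma>) ! l) \<in> \<alpha>"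
  proof (intro allI impI)
    fix l assume l: "1 \<le> l \<and> l < m + L + 1"
    then obtain l' where "l = Suc l'" by (cases l) auto
    then show "((\<sigma>2 i # args m \<sigma>2) ! l, (\<sigma> i # args m \<sigma>) ! l) \<in> \<alpha>"
      using l args_rel[OF s2 s] by simp
  qed
  have sets: "set (\<sigma>1 i # args m \<sigma>1) \<subseteq> fst A" "set (\<sigma>2 i # args m \<sigma>2) \<subseteq> fst A"
    "set (\<sigma> i # args m \<sigma>) \<subseteq> fst A"
    using args_A[OF s1] args_A[OF s2] args_A[OF s] Sig_val[OF s i] si aA bA by auto
  have H: "\<And>k t xs ys zs. 1 \<le> k \<Longrightarrow> t \<in> Clo ar A k \<Longrightarrow>
        length xs = k \<and> length ys = k \<and> length zs = k \<and>
        set xs \<subseteq> fst A \<and> set ys \<subseteq> fst A \<and> set zs \<subseteq> fst A \<and>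
        (\<forall>i < k. (xs ! i, ys ! i) \<in> \<alpha>) \<and>
        (\<forall>i. 1 \<le> i \<and> i < k \<longrightarrow> (ys ! i, zs ! i) \<in> \<alpha>) \<and>
        t xs = t ys \<Longrightarrow>
        t (xs ! 0 # tl zs) = t (ys ! 0 # tl zs)"
    using sab unfolding strongly_abelian_def by blast
  have eq': "t' (\<sigma>1 i # args m \<sigma>1) = t' (\<sigma>2 i # args m \<sigma>2)"
    using eq by (simp add: key)
  have "t' ((\<sigma>1 i # args m \<sigma>1) ! 0 # tl (\<sigma> i # args m \<sigma>)) = t' ((\<sigma>2 i # args m \<sigma>2) ! 0 # tl (\<sigma> i # args m \<sigma>))"
  proof (rule H[OF _ t'C])
    show "1 \<le> m + L + 1" by simp
    show "length (\<sigma>1 i # args m \<sigma>1) = m + L + 1 \<and> length (\<sigma>2 i # args m \<sigma>2) = m + L + 1 \<and>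
      length (\<sigma> i # args m \<sigma>) = m + L + 1 \<and>
      set (\<sigma>1 i # args m \<sigma>1) \<subseteq> fst A \<and> set (\<sigma>2 i # args m \<sigma>2) \<subseteq> fst A \<and>
      set (\<sigma> i # args m \<sigma>) \<subseteq> fst A \<and>
      (\<forall>l<m + L + 1. ((\<sigma>1 i # args m \<sigma>1) ! l, (\<sigma>2 i # args m \<sigma>2) ! l) \<in> \<alpha>) \<and>
      (\<forall>l. 1 \<le> l \<and> l < m + L + 1 \<longrightarrow> ((\<sigma>2 i # args m \<sigma>2) ! l, (\<sigma> i # args m \<sigma>) ! l) \<in> \<alpha>) \<and>
      t' (\<sigma>1 i # args m \<sigma>1) = t' (\<sigma>2 i # args m \<sigma>2)"
      using rel1 rel2 sets eq' by simp
  qed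
  then show ?thesis by (simp add: key)
qed

definition Ess :: "nat \<Rightarrow> ((nat \<Rightarrow> 'a) \<Rightarrow> 'a) \<Rightarrow> nat set" where
  "Ess m q = {i. i < m \<and> (\<exists>\<sigma>\<in>Sig m. q (\<sigma>(i := a)) \<noteq> q (\<sigma>(i := b)))}"

lemma Sig_upd: "\<sigma> \<in> Sig m \<Longrightarrow> i < m \<Longrightarrow> x \<in> {a, b} \<Longrightarrow> \<sigma>(i := x) \<in> Sig m"
  unfolding Sig_def by (auto simp: PiE_def Pi_def extensional_def)

lemma Ycar_tc:
  assumes q: "q \<in> Ycar m" and i: "i < m"
    and s1: "\<sigma>1 \<in> Sig m" and s2: "\<sigma>2 \<in> Sig m" and s: "\<sigma> \<in> Sig m"
    and eq: "q \<sigma>1 = q \<sigma>2"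
  shows "q (\<sigma>(i := \<sigma>1 i)) = q (\<sigma>(i := \<sigma>2 i))"
proof -
  obtain t where t: "t \<in> Clo ar A (m + L)" and qt: "q = restrict (\<lambda>\<sigma>. t (args m \<sigma>)) (Sig m)"
    using q unfolding Ycar_def by blast
  have u: "\<sigma>(i := \<sigma>1 i) \<in> Sig m" "\<sigma>(i := \<sigma>2 i) \<in> Sig m"
    using Sig_upd Sig_val s s1 s2 i by auto
  have "t (args m \<sigma>1) = t (args m \<sigma>2)" using eq s1 s2 qt by simp
  from poly_tc[OF t i s1 s2 s this] show ?thesis using qt u by simp
qed


lemma Ycar_undef: "q \<in> Ycar m \<Longrightarrow> \<sigma> \<notin> Sig m \<Longrightarrow> q \<sigma> = undefined"
  unfolding Ycar_def by auto

lemma Sig_eq: "\<sigma> \<in> Sig m \<Longrightarrow> \<tau> \<in> Sig m \<Longrightarrow> (\<And>i. i < m \<Longrightarrow> \<sigma> i = \<tau> i) \<Longrightarrow> \<sigma> = \<tau>"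
  unfolding Sig_def by (rule PiE_ext) auto

lemma upd_same: assumes s: "\<sigma> \<in> Sig m" and i: "i < m" and ni: "i \<notin> Ess m q"
    and x: "x \<in> {a, b}" and y: "y \<in> {a, b}"
  shows "q (\<sigma>(i := x)) = q (\<sigma>(i := y))"
proof -
  have "q (\<sigma>(i := a)) = q (\<sigma>(i := b))" using ni i s unfolding Ess_def by blast
  then show ?thesis using x y by auto
qed

lemma agree_aux:
  "\<forall>\<sigma>. \<sigma> \<in> Sig m \<longrightarrow> (\<forall>i\<in>Ess m q. \<sigma> i = \<tau> i) \<longrightarrow> card {i. i < m \<and> \<sigma> i \<noteq> \<tau> i} = d
     \<longrightarrow> q \<sigma> = q \<tau>" if t: "\<tau> \<in> Sig m"
proof (induction d)
  case 0
  show ?case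
  proof (intro allI impI)
    fix \<sigma> assume s: "\<sigma> \<in> Sig m" and "\<forall>i\<in>Ess m q. \<sigma> i = \<tau> i"
      and c: "card {i. i < m \<and> \<sigma> i \<noteq> \<tau> i} = 0"
    have "finite {i. i < m \<and> \<sigma> i \<noteq> \<tau> i}" by simp
    then have "{i. i < m \<and> \<sigma> i \<noteq> \<tau> i} = {}" using c by simp
    then have "\<sigma> = \<tau>" using s t by (intro Sig_eq) auto
    then show "q \<sigma> = q \<tau>" by simp
  qed
next
  case (Suc d)
  show ?case
  proof (intro allI impI)
    fix \<sigma> assume s: "\<sigma> \<in> Sig m" and ag: "\<forall>i\<in>Ess m q. \<sigma> i = \<tau> i"
      and c: "card {i. i < m \<and> \<sigma> i \<noteq> \<tau> i} = Suc d"
    then obtain i where i: "i < m" "\<sigma> i \<noteq> \<tau> i"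
      by (metis (mono_tags, lifting) card.empty empty_Collect_eq nat.distinct(1))
    define \<sigma>' where "\<sigma>' = \<sigma>(i := \<tau> i)"
    have ti: "\<tau> i \<in> {a, b}" and si: "\<sigma> i \<in> {a, b}" using Sig_val t s i by auto
    have s': "\<sigma>' \<in> Sig m" unfolding \<sigma>'_def using Sig_upd[OF s i(1) ti] .
    have ag': "\<forall>j\<in>Ess m q. \<sigma>' j = \<tau> j" using ag by (simp add: \<sigma>'_def)
    have "{j. j < m \<and> \<sigma>' j \<noteq> \<tau> j} = {j. j < m \<and> \<sigma> j \<noteq> \<tau> j} - {i}"
      by (auto simp: \<sigma>'_def)
    then have "card {j. j < m \<and> \<sigma>' j \<noteq> \<tau> j} = d" using c i by simp
    then have "q \<sigma>' = q \<tau>" using Suc s' ag' by blast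
    moreover have "i \<notin> Ess m q" using ag i by blast
    then have "q (\<sigma>(i := \<sigma> i)) = q (\<sigma>(i := \<tau> i))" using upd_same[OF s i(1) _ si ti] by blast
    then have "q \<sigma> = q \<sigma>'" by (simp add: \<sigma>'_def)
    ultimately show "q \<sigma> = q \<tau>" by simp
  qed
qed

lemma agree: "\<sigma> \<in> Sig m \<Longrightarrow> \<tau> \<in> Sig m \<Longrightarrow> (\<forall>i\<in>Ess m q. \<sigma> i = \<tau> i) \<Longrightarrow> q \<sigma> = q \<tau>"
  using agree_aux by blast

definition ext :: "nat \<Rightarrow> nat set \<Rightarrow> (nat \<Rightarrow> 'a) \<Rightarrow> nat \<Rightarrow> 'a" where
  "ext m E \<tau> = (\<lambda>i. if i \<in> E then \<tau> i else if i < m then a else undefined)"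

lemma Ess_sub: "Ess m q \<subseteq> {..<m}" unfolding Ess_def by auto

lemma ext_Sig: "E \<subseteq> {..<m} \<Longrightarrow> \<tau> \<in> E \<rightarrow>\<^sub>E {a, b} \<Longrightarrow> ext m E \<tau> \<in> Sig m"
  unfolding Sig_def ext_def by (auto simp: PiE_def Pi_def extensional_def)

lemma restr_Sig: "\<sigma> \<in> Sig m \<Longrightarrow> E \<subseteq> {..<m} \<Longrightarrow> restrict \<sigma> E \<in> E \<rightarrow>\<^sub>E {a, b}"
  using Sig_val by auto

lemma Ess_inj: assumes q: "q \<in> Ycar m"
  shows "inj_on (\<lambda>\<tau>. q (ext m (Ess m q) \<tau>)) (Ess m q \<rightarrow>\<^sub>E {a, b})"
proof (rule inj_onI, rule ccontr)
  fix \<tau>1 \<tau>2 assume t1: "\<tau>1 \<in> Ess m q \<rightarrow>\<^sub>E {a, b}" and t2: "\<tau>2 \<in> Ess m q \<rightarrow>\<^sub>E {a, b}"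
    and eq: "q (ext m (Ess m q) \<tau>1) = q (ext m (Ess m q) \<tau>2)" and ne: "\<tau>1 \<noteq> \<tau>2"
  obtain i where i: "i \<in> Ess m q" "\<tau>1 i \<noteq> \<tau>2 i"
    using ne t1 t2 by (metis PiE_ext)
  have im: "i < m" using i Ess_sub by auto
  obtain \<sigma> where s: "\<sigma> \<in> Sig m" and neq: "q (\<sigma>(i := a)) \<noteq> q (\<sigma>(i := b))"
    using i unfolding Ess_def by blast
  have e1: "ext m (Ess m q) \<tau>1 \<in> Sig m" and e2: "ext m (Ess m q) \<tau>2 \<in> Sig m"
    using ext_Sig[OF Ess_sub] t1 t2 by auto
  have "q (\<sigma>(i := ext m (Ess m q) \<tau>1 i)) = q (\<sigma>(i := ext m (Ess m q) \<tau>2 i))"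
    by (rule Ycar_tc[OF q im e1 e2 s eq])
  then have "q (\<sigma>(i := \<tau>1 i)) = q (\<sigma>(i := \<tau>2 i))" using i by (simp add: ext_def)
  moreover have "\<tau>1 i \<in> {a, b}" "\<tau>2 i \<in> {a, b}" using t1 t2 i by auto
  ultimately show False using i(2) neq by auto
qed

lemma Ess_card: assumes q: "q \<in> Ycar m" shows "2 ^ card (Ess m q) \<le> card (fst A)"
proof -
  have finE: "finite (Ess m q)" using Ess_sub finite_subset by blast
  have "card (Ess m q \<rightarrow>\<^sub>E {a, b}) = 2 ^ card (Ess m q)"
  proof -
    have "card {a, b} = 2" using anb by simp
    then show ?thesis using finE by (simp add: card_PiE)
  qed
  moreover have "card (Ess m q \<rightarrow>\<^sub>E {a, b}) \<le> card (fst A)"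
  proof (rule card_inj_on_le[OF Ess_inj[OF q] _ fin])
    show "(\<lambda>\<tau>. q (ext m (Ess m q) \<tau>)) ` (Ess m q \<rightarrow>\<^sub>E {a, b}) \<subseteq> fst A"
      using Ycar_val[OF q] ext_Sig[OF Ess_sub] by blast
  qed
  ultimately show ?thesis by simp
qed


lemma pow_log: fixes e N :: nat assumes "2 ^ e \<le> N" shows "e \<le> nat \<lfloor>log 2 (real N)\<rfloor>"
proof -
  have "(1::nat) \<le> 2 ^ e" by simp
  then have N: "real N > 0" using assms by linarith
  have "(2::real) ^ e \<le> real N" using assms by (metis of_nat_le_iff of_nat_numeral of_nat_power)
  then have "2 powr real e \<le> real N" by (simp add: powr_realpow)
  then have "real e \<le> log 2 (real N)" using le_log_iff[of 2 "real N" "real e"] N by simp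
  then show ?thesis by (rule le_nat_floor)
qed

abbreviation kk where "kk \<equiv> nat \<lfloor>log 2 (real (card (fst A)))\<rfloor>"

definition Phi :: "nat \<Rightarrow> ((nat \<Rightarrow> 'a) \<Rightarrow> 'a) \<Rightarrow> nat set \<times> ((nat \<Rightarrow> 'a) \<Rightarrow> 'a)" where
  "Phi m q = (Ess m q, restrict (\<lambda>\<tau>. q (ext m (Ess m q) \<tau>)) (Ess m q \<rightarrow>\<^sub>E {a, b}))"

definition Sets :: "nat \<Rightarrow> nat set set" where
  "Sets m = {E. E \<subseteq> {..<m} \<and> card E \<le> kk}"

definition Tgt :: "nat \<Rightarrow> (nat set \<times> ((nat \<Rightarrow> 'a) \<Rightarrow> 'a)) set" where
  "Tgt m = Sigma (Sets m) (\<lambda>E. (E \<rightarrow>\<^sub>E {a, b}) \<rightarrow>\<^sub>E fst A)"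

lemma Phi_into: assumes q: "q \<in> Ycar m" shows "Phi m q \<in> Tgt m"
proof -
  have "Ess m q \<in> Sets m" using Ess_sub pow_log[OF Ess_card[OF q]] by (simp add: Sets_def)
  moreover have "restrict (\<lambda>\<tau>. q (ext m (Ess m q) \<tau>)) (Ess m q \<rightarrow>\<^sub>E {a, b})
      \<in> (Ess m q \<rightarrow>\<^sub>E {a, b}) \<rightarrow>\<^sub>E fst A"
    using Ycar_val[OF q] ext_Sig[OF Ess_sub] by auto
  ultimately show ?thesis by (simp add: Phi_def Tgt_def)
qed

lemma Phi_inj: "inj_on (Phi m) (Ycar m)"
proof (rule inj_onI)
  fix q1 q2 assume q1: "q1 \<in> Ycar m" and q2: "q2 \<in> Ycar m" and eq: "Phi m q1 = Phi m q2"
  define E where "E = Ess m q1"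
  have E2: "Ess m q2 = E" using eq by (simp add: Phi_def E_def)
  have g: "restrict (\<lambda>\<tau>. q1 (ext m E \<tau>)) (E \<rightarrow>\<^sub>E {a, b}) = restrict (\<lambda>\<tau>. q2 (ext m E \<tau>)) (E \<rightarrow>\<^sub>E {a, b})"
    using eq by (simp add: Phi_def E_def E2)
  have Esub: "E \<subseteq> {..<m}" using Ess_sub E_def by simp
  show "q1 = q2"
  proof (rule ext)
    fix \<sigma>
    show "q1 \<sigma> = q2 \<sigma>"
    proof (cases "\<sigma> \<in> Sig m")
      case True
      define \<tau> where "\<tau> = restrict \<sigma> E"
      have t: "\<tau> \<in> E \<rightarrow>\<^sub>E {a, b}" using restr_Sig[OF True Esub] by (simp add: \<tau>_def)
      have es: "ext m E \<tau> \<in> Sig m" using ext_Sig[OF Esub t] .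
      have ag: "\<forall>i\<in>E. \<sigma> i = ext m E \<tau> i" by (simp add: ext_def \<tau>_def)
      have "q1 \<sigma> = q1 (ext m E \<tau>)" using agree[OF True es] ag E_def by simp
      also have "\<dots> = q2 (ext m E \<tau>)" using fun_cong[OF g, of \<tau>] t by simp
      also have "\<dots> = q2 \<sigma>" using agree[OF True es, of q2] ag E2 by simp
      finally show ?thesis .
    next
      case False
      then show ?thesis using Ycar_undef[OF q1 False] Ycar_undef[OF q2 False] by simp
    qed
  qed
qed

lemma Sets_card: "card (Sets m) \<le> Suc m ^ kk"
proof -
  have sub: "Sets m \<subseteq> (\<lambda>f. f ` {..<kk} - {m}) ` ({..<kk} \<rightarrow>\<^sub>E {..<Suc m})"
  proof
    fix E assume "E \<in> Sets m"
    then have Es: "E \<subseteq> {..<m}" and Ec: "card E \<le> kk" by (auto simp: Sets_def)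
    have finE: "finite E" using Es finite_subset by blast
    obtain h where h: "bij_betw h {0..<card E} E" using ex_bij_betw_nat_finite[OF finE] by blast
    define f where "f = restrict (\<lambda>j. if j < card E then h j else m) {..<kk}"
    have "f \<in> {..<kk} \<rightarrow>\<^sub>E {..<Suc m}"
    proof -
      have "h j \<in> E" if "j < card E" for j using h that by (auto simp: bij_betw_def)
      then show ?thesis using Es by (force simp: f_def)
    qed
    moreover have "f ` {..<kk} - {m} = E"
    proof
      show "f ` {..<kk} - {m} \<subseteq> E"
        using h by (auto simp: f_def bij_betw_def)
      show "E \<subseteq> f ` {..<kk} - {m}"
      proof
        fix e assume e: "e \<in> E"
        then obtain j where j: "j < card E" "h j = e" using h
          by (metis atLeastLessThan_iff bij_betw_iff_bijections)
        have "f j = e" using j Ec by (simp add: f_def)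
        moreover have "j \<in> {..<kk}" using j Ec by simp
        moreover have "e \<noteq> m" using e Es by auto
        ultimately show "e \<in> f ` {..<kk} - {m}" by force
      qed
    qed
    ultimately show "E \<in> (\<lambda>f. f ` {..<kk} - {m}) ` ({..<kk} \<rightarrow>\<^sub>E {..<Suc m})" by force
  qed
  have "card (Sets m) \<le> card ((\<lambda>f. f ` {..<kk} - {m}) ` ({..<kk} \<rightarrow>\<^sub>E {..<Suc m}))"
    by (rule card_mono[OF _ sub]) (simp add: finite_PiE)
  also have "\<dots> \<le> card ({..<kk} \<rightarrow>\<^sub>E {..<Suc m})" by (rule card_image_le) (simp add: finite_PiE)
  also have "\<dots> = Suc m ^ kk" by (simp add: card_PiE)
  finally show ?thesis .
qed

lemma fin_fun: "E \<in> Sets m \<Longrightarrow> finite ((E \<rightarrow>\<^sub>E {a, b}) \<rightarrow>\<^sub>E fst A)"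
proof -
  assume "E \<in> Sets m"
  then have "finite E" by (auto simp: Sets_def intro: finite_subset)
  then have f1: "finite (E \<rightarrow>\<^sub>E {a, b})" by (intro finite_PiE) auto
  show ?thesis by (rule finite_PiE[OF f1 fin])
qed

lemma finSets: "finite (Sets m)"
  by (rule finite_subset[of _ "Pow {..<m}"]) (auto simp: Sets_def)

lemma Tgt_card: "card (Tgt m) \<le> Suc m ^ kk * card (fst A) ^ (2 ^ kk)"
proof -
  have A1: "1 \<le> card (fst A)" using aA fin by (metis One_nat_def Suc_leI card_gt_0_iff empty_iff)
  have "card (Tgt m) = (\<Sum>E\<in>Sets m. card ((E \<rightarrow>\<^sub>E {a, b}) \<rightarrow>\<^sub>E fst A))"
    unfolding Tgt_def using finSets
    by (subst card_SigmaI) (auto simp: fin_fun)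
  also have "\<dots> \<le> (\<Sum>E\<in>Sets m. card (fst A) ^ (2 ^ kk))"
  proof (rule sum_mono)
    fix E assume "E \<in> Sets m"
    then have Es: "E \<subseteq> {..<m}" and Ec: "card E \<le> kk" by (auto simp: Sets_def)
    have finE: "finite E" using Es finite_subset by blast
    have c2: "card {a, b} = 2" using anb by simp
    have "card ((E \<rightarrow>\<^sub>E {a, b}) \<rightarrow>\<^sub>E fst A) = card (fst A) ^ (2 ^ card E)"
      using finE c2 by (simp add: card_PiE finite_PiE)
    also have "\<dots> \<le> card (fst A) ^ (2 ^ kk)"
      using A1 Ec by (intro power_increasing) auto
    finally show "card ((E \<rightarrow>\<^sub>E {a, b}) \<rightarrow>\<^sub>E fst A) \<le> card (fst A) ^ (2 ^ kk)" .
  qed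
  also have "\<dots> = card (Sets m) * card (fst A) ^ (2 ^ kk)" by simp
  also have "\<dots> \<le> Suc m ^ kk * card (fst A) ^ (2 ^ kk)" using Sets_card by simp
  finally show ?thesis .
qed

lemma finTgt: "finite (Tgt m)"
  unfolding Tgt_def using finSets
  by (intro finite_SigmaI) (auto simp: fin_fun)

lemma Ycar_fin: "finite (Ycar m)"
  by (rule inj_on_finite[OF Phi_inj _ finTgt]) (use Phi_into in blast)

lemma Ycar_card: "card (Ycar m) \<le> Suc m ^ kk * card (fst A) ^ (2 ^ kk)"
proof -
  have "card (Ycar m) \<le> card (Tgt m)"
    by (rule card_inj_on_le[OF Phi_inj _ finTgt]) (use Phi_into in blast)
  then show ?thesis using Tgt_card[of m] by (rule order_trans)
qed


lemma cs_ge: assumes "Suc m ^ kk * card (fst A) ^ (2 ^ kk) \<le> n" shows "2 ^ m \<le> cs ar A n"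
proof -
  have "2 ^ m \<le> card (surj_homs ar (Ycar m, Yop m) A)" by (rule many_homs[OF Ycar_fin])
  also have "\<dots> \<le> cs ar A n"
    by (rule cs_lower[OF Y_alg _ _ fin]) (use Ycar_fin order_trans[OF Ycar_card[of m] assms] in auto)
  finally show ?thesis .
qed

lemma kk_ge1: "1 \<le> kk"
proof -
  have "card {a, b} \<le> card (fst A)" using aA bA fin by (intro card_mono) auto
  then have "2 ^ 1 \<le> card (fst A)" using anb by simp
  then show ?thesis by (rule pow_log)
qed

lemma D_ge1: "1 \<le> card (fst A) ^ (2 ^ kk)"
proof -
  have "0 < card (fst A)" using aA fin card_gt_0_iff by blast
  then show ?thesis by simp
qed

end

lemma root_pow: fixes x :: real assumes "x > 0" "K \<ge> 1" shows "(x ^ K) powr (1 / real K) = x"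
proof -
  have "x ^ K = x powr real K" using assms by (simp add: powr_realpow)
  then have "(x ^ K) powr (1 / real K) = x powr (real K * (1 / real K))" by (simp add: powr_powr)
  also have "\<dots> = x" using assms by simp
  finally show ?thesis .
qed

lemma pow_root: fixes x :: real assumes "x > 0" "K \<ge> 1" shows "(x powr (1 / real K)) ^ K = x"
proof -
  have p: "x powr (1 / real K) > 0" using assms by simp
  have "(x powr (1 / real K)) ^ K = (x powr (1 / real K)) powr real K" using p by (simp add: powr_realpow)
  also have "\<dots> = x powr (1 / real K * real K)" by (simp add: powr_powr)
  also have "\<dots> = x" using assms by simp
  finally show ?thesis .
qed

lemma asym:
  fixes K D :: nat and F :: "nat \<Rightarrow> nat"
  assumes K: "K \<ge> 1" and D: "D \<ge> 1" and H: "\<And>m n. Suc m ^ K * D \<le> n \<Longrightarrow> 2 ^ m \<le> F n"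
  shows "\<exists>C > 0. \<forall>\<^sub>F n in sequentially. real (F n) \<ge> 2 powr (C * real n powr (1 / real K))"
proof (intro exI conjI)
  define C where "C = 1 / (2 * real D)"
  show "C > 0" using D by (simp add: C_def)
  show "\<forall>\<^sub>F n in sequentially. real (F n) \<ge> 2 powr (C * real n powr (1 / real K))"
  proof (rule eventually_sequentiallyI[of "(4 * D) ^ K"])
    fix n assume n: "(4 * D) ^ K \<le> n"
    define r where "r = real n powr (1 / real K)"
    have Dr: "real D \<ge> 1" using D by simp
    have "(1::nat) \<le> (4 * D) ^ K" using D by simp
    then have npos: "real n > 0" using n by linarith
    have rpos: "r > 0" using npos by (simp add: r_def)
    have "real ((4 * D) ^ K) \<le> real n" using n by (simp only: of_nat_le_iff)
    then have "(real (4 * D) ^ K) powr (1 / real K) \<le> r"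
      unfolding r_def by (intro powr_mono2) auto
    then have r4: "4 * real D \<le> r" using root_pow[of "real (4 * D)" K] K D by simp
    have rK: "r ^ K = real n" using pow_root[OF npos K] by (simp add: r_def)
    define j where "j = nat \<lfloor>r / real D\<rfloor>"
    have rD4: "r / real D \<ge> 4" using r4 Dr by (simp add: field_simps)
    have fl0: "0 \<le> \<lfloor>r / real D\<rfloor>" using rD4 by simp
    have jr: "real j = of_int \<lfloor>r / real D\<rfloor>" unfolding j_def using fl0 by simp
    have j1: "real j \<le> r / real D" using jr by simp
    have j2: "r / real D - 1 < real j" using jr real_of_int_floor_add_one_gt[of "r / real D"] by linarith
    have jpos: "j \<ge> 1" using j2 rD4 by linarith
    define m where "m = j - 1"
    have jm: "Suc m = j" using jpos by (simp add: m_def)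
    have "real (Suc m ^ K * D) = real j ^ K * real D" using jm by simp
    also have "\<dots> \<le> real j ^ K * real D ^ K"
    proof -
      have "real D ^ 1 \<le> real D ^ K" using Dr K by (intro power_increasing) auto
      then show ?thesis by (intro mult_left_mono) auto
    qed
    also have "\<dots> = (real j * real D) ^ K" by (simp add: power_mult_distrib)
    also have "\<dots> \<le> r ^ K"
    proof (rule power_mono)
      show "real j * real D \<le> r" using j1 Dr by (simp add: field_simps)
    qed simp
    also have "\<dots> = real n" by (rule rK)
    finally have "Suc m ^ K * D \<le> n" by (simp only: of_nat_le_iff)
    then have h: "2 ^ m \<le> F n" by (rule H)
    have "C * r = r / real D / 2" by (simp add: C_def)
    also have "\<dots> \<le> real m" using j2 rD4 jpos by (simp add: m_def of_nat_diff)
    finally have "C * r \<le> real m" .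
    then have "2 powr (C * r) \<le> 2 powr real m" by simp
    also have "\<dots> = 2 ^ m" by (simp add: powr_realpow)
    also have "\<dots> \<le> real (F n)" using h by (metis of_nat_le_iff of_nat_numeral of_nat_power)
    finally show "2 powr (C * real n powr (1 / real K)) \<le> real (F n)" by (simp add: r_def)
  qed
qed


theorem corollary3p5:
  fixes ar :: "'s \<Rightarrow> nat" and A :: "('a, 's) alg" and \<alpha> :: "('a \<times> 'a) set"
  assumes "is_algebra ar A" and "finite (fst A)"
    and "is_congruence ar A \<alpha>" and "strongly_abelian ar A \<alpha>" and "\<alpha> \<noteq> Id_on (fst A)"
  shows "\<exists>C > 0. \<forall>\<^sub>F n in sequentially.
           real (cs ar A n) \<ge> 2 powr (C * real n powr (1 / real (nat (floor (log 2 (real (card (fst A))))))))"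
proof -
  have eqv: "equiv (fst A) \<alpha>" using assms(3) by (simp add: is_congruence_def)
  have "Id_on (fst A) \<subseteq> \<alpha>" using eqv unfolding equiv_def by (auto intro: refl_onD)
  then obtain a b where ab: "(a, b) \<in> \<alpha>" and nid: "(a, b) \<notin> Id_on (fst A)"
    using assms(5) by auto
  have "a \<in> fst A" using equiv_type[OF eqv] ab by auto
  then have anb: "a \<noteq> b" using nid by auto
  obtain cl where cl: "set cl = fst A" using finite_list[OF assms(2)] by blast
  interpret sactx ar A \<alpha> a b cl
    by unfold_locales (use assms ab anb cl in auto)
  show ?thesis by (rule asym[OF kk_ge1 D_ge1 cs_ge])
qed

end
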